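(* Let $t\ge 1$ and let $\kappa_1,\ldots,\kappa_t$ be integers with $\kappa_i\ge 2$ and $\kappa_1\kappa_2\cdots\kappa_t=n$. Let $\ell_{i,j}$ be integers with $0\le \ell_{i,j}\le \kappa_j-1$ for $i=2,\ldots,t$ and $j=1,\ldots,i-1$. Then, with $K=(\kappa_i)$ and $L=(\ell_{i,j})$, the set $\Gamma(K,L)$ is an Abelian group (under the multiplication of the quotient ring) of order $|\Gamma(K,L)|=n$.
   Context: Let $I$ be the ideal of the polynomial ring $\mathbb{R}[x_1,\ldots,x_t]$ generated by $x_1^{\kappa_1}-1$ and by $x_i^{\kappa_i}-x_1^{\ell_{i,1}}\cdots x_{i-1}^{\ell_{i,i-1}}$ for $i=2,\ldots,t$. The monomial group $\Gamma(K,L)$ is the set of residue classes in $\mathbb{R}[x_1,\ldots,x_t]/I$ of the monomials $x_1^{j_1}x_2^{j_2}\cdots x_t^{j_t}$ with $0\le j_i\le \kappa_i-1$ for all $i$; a product of two such monomials is reduced back to this form using the relations $x_1^{\kappa_1}=1$ and $x_i^{\kappa_i}=x_1^{\ell_{i,1}}\cdots x_{i-1}^{\ell_{i,i-1}}$ ($i\ge 2$). *)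

theory Defs
  imports Complex_Main "HOL-Library.Poly_Mapping" "HOL-Algebra.Group"
begin

type_synonym mpoly = "(nat \<Rightarrow>\<^sub>0 nat) \<Rightarrow>\<^sub>0 real"

definition Xv :: "nat \<Rightarrow> mpoly" where
  "Xv i = Poly_Mapping.single (Poly_Mapping.single i 1) 1"

definition gen :: "(nat \<Rightarrow> nat) \<Rightarrow> (nat \<Rightarrow> nat \<Rightarrow> nat) \<Rightarrow> nat \<Rightarrow> mpoly" where
  "gen K L i = (if i = 1 then Xv 1 ^ K 1 - 1
                 else Xv i ^ K i - (\<Prod>j\<in>{1..<i}. Xv j ^ L i j))"

text \<open>The ideal of R[x_1,...,x_t] generated by gen 1, ..., gen t.\<close>
definition idealI :: "nat \<Rightarrow> (nat \<Rightarrow> nat) \<Rightarrow> (nat \<Rightarrow> nat \<Rightarrow> nat) \<Rightarrow> mpoly set" where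
  "idealI t K L = {p. \<exists>c. (\<forall>i\<in>{1..t}. \<forall>e. Poly_Mapping.lookup (c i) e \<noteq> 0 \<longrightarrow> (\<forall>k. k \<notin> {1..t} \<longrightarrow> Poly_Mapping.lookup e k = 0))
                        \<and> p = (\<Sum>i\<in>{1..t}. c i * gen K L i)}"

definition polys :: "nat \<Rightarrow> mpoly set" where
  "polys t = {p. \<forall>e. Poly_Mapping.lookup p e \<noteq> 0 \<longrightarrow> (\<forall>k. k \<notin> {1..t} \<longrightarrow> Poly_Mapping.lookup e k = 0)}"

definition cls :: "nat \<Rightarrow> (nat \<Rightarrow> nat) \<Rightarrow> (nat \<Rightarrow> nat \<Rightarrow> nat) \<Rightarrow> mpoly \<Rightarrow> mpoly set" where
  "cls t K L p = {q \<in> polys t. q - p \<in> idealI t K L}"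

definition qmult :: "nat \<Rightarrow> (nat \<Rightarrow> nat) \<Rightarrow> (nat \<Rightarrow> nat \<Rightarrow> nat) \<Rightarrow> mpoly set \<Rightarrow> mpoly set \<Rightarrow> mpoly set" where
  "qmult t K L A B = {q \<in> polys t. \<exists>a\<in>A. \<exists>b\<in>B. q - a * b \<in> idealI t K L}"

definition mon :: "nat \<Rightarrow> (nat \<Rightarrow> nat) \<Rightarrow> mpoly" where
  "mon t j = (\<Prod>i\<in>{1..t}. Xv i ^ j i)"

definition Gamma :: "nat \<Rightarrow> (nat \<Rightarrow> nat) \<Rightarrow> (nat \<Rightarrow> nat \<Rightarrow> nat) \<Rightarrow> mpoly set set" where
  "Gamma t K L = {cls t K L (mon t j) | j. \<forall>i\<in>{1..t}. j i < K i}"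

definition GammaGroup :: "nat \<Rightarrow> (nat \<Rightarrow> nat) \<Rightarrow> (nat \<Rightarrow> nat \<Rightarrow> nat) \<Rightarrow> mpoly set monoid" where
  "GammaGroup t K L = \<lparr>carrier = Gamma t K L, mult = qmult t K L, one = cls t K L 1\<rparr>"

end

theory Submission
  imports Defs
begin

lemma polys_iff: "p \<in> polys t \<longleftrightarrow> (\<forall>e\<in>Poly_Mapping.keys p. Poly_Mapping.keys e \<subseteq> {1..t})"
proof -
  have *: "Poly_Mapping.keys e \<subseteq> {1..t} \<longleftrightarrow> (\<forall>k. k \<notin> {1..t} \<longrightarrow> Poly_Mapping.lookup e k = 0)" for e :: "nat \<Rightarrow>\<^sub>0 nat"
    by (auto simp: in_keys_iff)
  have "(\<forall>e\<in>Poly_Mapping.keys p. Poly_Mapping.keys e \<subseteq> {1..t}) \<longleftrightarrow> (\<forall>e. Poly_Mapping.lookup p e \<noteq> 0 \<longrightarrow> Poly_Mapping.keys e \<subseteq> {1..t})"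
    by (simp only: in_keys_iff Ball_def)
  also have "\<dots> \<longleftrightarrow> p \<in> polys t" unfolding polys_def by (simp only: * mem_Collect_eq)
  finally show ?thesis by simp
qed

lemma polys_add: "p \<in> polys t \<Longrightarrow> q \<in> polys t \<Longrightarrow> p + q \<in> polys t"
  unfolding polys_iff using keys_add[of p q] by blast

lemma polys_uminus: "p \<in> polys t \<Longrightarrow> - p \<in> polys t"
  unfolding polys_iff by simp

lemma polys_diff: "p \<in> polys t \<Longrightarrow> q \<in> polys t \<Longrightarrow> p - q \<in> polys t"
  using polys_add[of p t "-q"] polys_uminus[of q t] by simp

lemma polys_mult: "p \<in> polys t \<Longrightarrow> q \<in> polys t \<Longrightarrow> p * q \<in> polys t"
proof -
  assume a: "p \<in> polys t" "q \<in> polys t"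
  show ?thesis unfolding polys_iff
  proof
    fix e assume "e \<in> Poly_Mapping.keys (p * q)"
    then obtain a b where "e = a + b" "a \<in> Poly_Mapping.keys p" "b \<in> Poly_Mapping.keys q"
      using keys_mult[of p q] by blast
    then show "Poly_Mapping.keys e \<subseteq> {1..t}" using a keys_add[of a b] unfolding polys_iff by blast
  qed
qed

lemma polys_zero: "0 \<in> polys t" unfolding polys_iff by simp
lemma polys_one: "1 \<in> polys t" unfolding polys_iff by simp

lemma polys_power: "p \<in> polys t \<Longrightarrow> p ^ m \<in> polys t"
  by (induction m) (auto intro: polys_mult polys_one)

lemma polys_prod: "(\<And>i. i \<in> A \<Longrightarrow> f i \<in> polys t) \<Longrightarrow> prod f A \<in> polys t"
  by (induction A rule: infinite_finite_induct) (auto intro: polys_mult polys_one)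

lemma polys_sum: "(\<And>i. i \<in> A \<Longrightarrow> f i \<in> polys t) \<Longrightarrow> sum f A \<in> polys t"
  by (induction A rule: infinite_finite_induct) (auto intro: polys_add polys_zero)

lemma polys_Xv: "i \<in> {1..t} \<Longrightarrow> Xv i \<in> polys t"
  unfolding polys_iff Xv_def by simp

lemma idealI_alt: "idealI t K L = {p. \<exists>c. (\<forall>i\<in>{1..t}. c i \<in> polys t) \<and> p = (\<Sum>i\<in>{1..t}. c i * gen K L i)}"
  unfolding idealI_def polys_def by simp

lemma I_zero: "0 \<in> idealI t K L"
  unfolding idealI_alt by (rule CollectI, rule exI[of _ "\<lambda>_. 0"]) (auto simp: polys_zero)

lemma I_add: "a \<in> idealI t K L \<Longrightarrow> b \<in> idealI t K L \<Longrightarrow> a + b \<in> idealI t K L"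
  unfolding idealI_alt
proof (clarify)
  fix c d assume "\<forall>i\<in>{1..t}. c i \<in> polys t" "\<forall>i\<in>{1..t}. d i \<in> polys t"
  then show "\<exists>e. (\<forall>i\<in>{1..t}. e i \<in> polys t) \<and> (\<Sum>i = 1..t. c i * gen K L i) + (\<Sum>i = 1..t. d i * gen K L i) = (\<Sum>i = 1..t. e i * gen K L i)"
    by (intro exI[of _ "\<lambda>i. c i + d i"]) (auto simp: polys_add sum.distrib distrib_right)
qed

lemma I_uminus: "a \<in> idealI t K L \<Longrightarrow> - a \<in> idealI t K L"
  unfolding idealI_alt
proof (clarify)
  fix c assume "\<forall>i\<in>{1..t}. c i \<in> polys t"
  then show "\<exists>e. (\<forall>i\<in>{1..t}. e i \<in> polys t) \<and> - (\<Sum>i = 1..t. c i * gen K L i) = (\<Sum>i = 1..t. e i * gen K L i)"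
    by (intro exI[of _ "\<lambda>i. - c i"]) (auto simp: polys_uminus sum_negf)
qed

lemma I_diff: "a \<in> idealI t K L \<Longrightarrow> b \<in> idealI t K L \<Longrightarrow> a - b \<in> idealI t K L"
  using I_add[of a t K L "-b"] I_uminus[of b t K L] by simp

lemma I_mult: "r \<in> polys t \<Longrightarrow> a \<in> idealI t K L \<Longrightarrow> r * a \<in> idealI t K L"
  unfolding idealI_alt
proof (clarify)
  fix c assume r: "r \<in> polys t" and "\<forall>i\<in>{1..t}. c i \<in> polys t"
  then show "\<exists>e. (\<forall>i\<in>{1..t}. e i \<in> polys t) \<and> r * (\<Sum>i = 1..t. c i * gen K L i) = (\<Sum>i = 1..t. e i * gen K L i)"
    by (intro exI[of _ "\<lambda>i. r * c i"]) (auto simp: polys_mult sum_distrib_left mult.assoc)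
qed

lemma I_gen: "i \<in> {1..t} \<Longrightarrow> gen K L i \<in> idealI t K L"
proof -
  assume i: "i \<in> {1..t}"
  have "(\<Sum>k\<in>{1..t}. (if k = i then 1 else 0) * gen K L k) = (\<Sum>k\<in>{1..t}. if k = i then gen K L k else 0)"
    by (rule sum.cong) auto
  also have "\<dots> = gen K L i" using i by (simp add: sum.delta)
  finally show ?thesis unfolding idealI_alt
    by (intro CollectI exI[of _ "\<lambda>k. if k = i then 1 else 0"]) (auto simp: polys_zero polys_one)
qed

definition eqv :: "nat \<Rightarrow> (nat \<Rightarrow> nat) \<Rightarrow> (nat \<Rightarrow> nat \<Rightarrow> nat) \<Rightarrow> mpoly \<Rightarrow> mpoly \<Rightarrow> bool" where
  "eqv t K L p q \<longleftrightarrow> p - q \<in> idealI t K L"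

lemma eqv_refl: "eqv t K L p p" unfolding eqv_def by (simp add: I_zero)
lemma eqv_sym: "eqv t K L p q \<Longrightarrow> eqv t K L q p" unfolding eqv_def
  using I_uminus by fastforce
lemma eqv_trans: "eqv t K L p q \<Longrightarrow> eqv t K L q r \<Longrightarrow> eqv t K L p r" unfolding eqv_def
  using I_add by fastforce
lemma eqv_mult:
  assumes "eqv t K L a b" "eqv t K L c d" "b \<in> polys t" "c \<in> polys t"
  shows "eqv t K L (a * c) (b * d)"
proof -
  have "a * c - b * d = c * (a - b) + b * (c - d)" by (simp add: algebra_simps)
  moreover have "c * (a - b) \<in> idealI t K L" using assms I_mult unfolding eqv_def by blast
  moreover have "b * (c - d) \<in> idealI t K L" using assms I_mult unfolding eqv_def by blast
  ultimately show ?thesis unfolding eqv_def using I_add[of "c * (a - b)" t K L "b * (c - d)"] by simp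
qed

lemma eqv_power:
  assumes "eqv t K L a b" "a \<in> polys t" "b \<in> polys t"
  shows "eqv t K L (a ^ m) (b ^ m)"
proof (induction m)
  case 0 then show ?case by (simp add: eqv_refl)
next
  case (Suc m) then show ?case using eqv_mult[OF assms(1) Suc _ polys_power[OF assms(2)]] assms
    by (simp add: polys_power)
qed

lemma eqv_prod:
  assumes "\<And>i. i \<in> A \<Longrightarrow> eqv t K L (f i) (g i)" "\<And>i. i \<in> A \<Longrightarrow> f i \<in> polys t" "\<And>i. i \<in> A \<Longrightarrow> g i \<in> polys t"
  shows "eqv t K L (prod f A) (prod g A)"
  using assms
proof (induction A rule: infinite_finite_induct)
  case (insert x F)
  then show ?case by (simp add: eqv_mult polys_prod)
qed (auto simp: eqv_refl)

lemma cls_alt: "cls t K L p = {q \<in> polys t. eqv t K L q p}"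
  by (simp add: cls_def eqv_def)

lemma qmult_alt: "qmult t K L A B = {q \<in> polys t. \<exists>a\<in>A. \<exists>b\<in>B. eqv t K L q (a * b)}"
  by (simp add: qmult_def eqv_def)

lemma cls_eq_iff: "p \<in> polys t \<Longrightarrow> q \<in> polys t \<Longrightarrow> cls t K L p = cls t K L q \<longleftrightarrow> eqv t K L p q"
proof
  assume p: "p \<in> polys t" and eq: "cls t K L p = cls t K L q"
  have "p \<in> cls t K L p" using p by (simp add: cls_alt eqv_refl)
  then have "p \<in> cls t K L q" by (simp only: eq)
  then show "eqv t K L p q" unfolding cls_alt by simp
next
  assume e: "eqv t K L p q"
  show "cls t K L p = cls t K L q" unfolding cls_alt
  proof (intro Collect_cong conj_cong refl iffI)
    fix x assume "eqv t K L x p" then show "eqv t K L x q" using e eqv_trans by metis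
  next
    fix x assume "eqv t K L x q" then show "eqv t K L x p" using e eqv_trans eqv_sym by metis
  qed
qed

lemma qmult_cls:
  assumes ab: "a \<in> polys t" "b \<in> polys t"
  shows "qmult t K L (cls t K L a) (cls t K L b) = cls t K L (a * b)"
proof (rule equalityI; rule subsetI)
  fix q assume "q \<in> qmult t K L (cls t K L a) (cls t K L b)"
  then obtain a' b' where a': "a' \<in> cls t K L a" and b': "b' \<in> cls t K L b" and q0: "q \<in> polys t" "eqv t K L q (a' * b')"
    unfolding qmult_alt by blast
  from a' b' have q: "a' \<in> polys t" "b' \<in> polys t" "eqv t K L a' a" "eqv t K L b' b"
    unfolding cls_alt by auto
  have "eqv t K L (a' * b') (a * b)" by (rule eqv_mult[OF q(3) q(4) ab(1) q(2)])
  then have "eqv t K L q (a * b)" using q0(2) eqv_trans by metis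
  then show "q \<in> cls t K L (a * b)" using q0(1) unfolding cls_alt by simp
next
  fix q assume q: "q \<in> cls t K L (a * b)"
  have "a \<in> cls t K L a" "b \<in> cls t K L b" using ab by (auto simp: cls_alt eqv_refl)
  then show "q \<in> qmult t K L (cls t K L a) (cls t K L b)"
    using q unfolding qmult_alt cls_alt by blast
qed

lemma mon_polys: "mon t j \<in> polys t"
  unfolding mon_def by (intro polys_prod polys_power polys_Xv) simp

lemma mon_add: "mon t (\<lambda>i. j i + j' i) = mon t j * mon t j'"
  unfolding mon_def by (simp add: power_add prod.distrib)

lemma mon_zero: "mon t (\<lambda>_. 0) = 1"
  unfolding mon_def by simp

lemma mon_power: "mon t j ^ m = mon t (\<lambda>i. m * j i)"
  unfolding mon_def by (simp add: prod_power_distrib power_mult[symmetric] mult.commute)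

lemma mon_cong: "(\<And>i. i \<in> {1..t} \<Longrightarrow> j i = j' i) \<Longrightarrow> mon t j = mon t j'"
  unfolding mon_def by (rule prod.cong) auto

lemma mon_single: "i \<in> {1..t} \<Longrightarrow> mon t (\<lambda>k. if k = i then c else 0) = Xv i ^ c"
proof -
  assume i: "i \<in> {1..t}"
  have "mon t (\<lambda>k. if k = i then c else 0) = (\<Prod>k\<in>{1..t}. if k = i then Xv k ^ c else 1)"
    unfolding mon_def by (rule prod.cong) auto
  also have "\<dots> = Xv i ^ c" using i by (simp add: prod.delta)
  finally show ?thesis .
qed

definition Rv :: "(nat \<Rightarrow> nat \<Rightarrow> nat) \<Rightarrow> nat \<Rightarrow> nat \<Rightarrow> nat" where
  "Rv L i = (\<lambda>k. if k < i then L i k else 0)"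

lemma R_eq:
  assumes "i \<le> t"
  shows "(\<Prod>k\<in>{1..<i}. Xv k ^ L i k) = mon t (Rv L i)"
proof -
  have "mon t (Rv L i) = (\<Prod>k\<in>{1..t}. if k < i then Xv k ^ L i k else 1)"
    unfolding mon_def Rv_def by (rule prod.cong) auto
  also have "\<dots> = (\<Prod>k\<in>{k\<in>{1..t}. k < i}. Xv k ^ L i k)"
    by (rule prod.inter_filter[symmetric]) simp
  also have "{k\<in>{1..t}. k < i} = {1..<i}" using assms by auto
  finally show ?thesis by simp
qed

lemma gen_eq: "i \<ge> 1 \<Longrightarrow> gen K L i = Xv i ^ K i - (\<Prod>k\<in>{1..<i}. Xv k ^ L i k)"
  unfolding gen_def by auto

lemma Xv_red:
  assumes "i \<in> {1..t}"
  shows "eqv t K L (Xv i ^ K i) (mon t (Rv L i))"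
  using I_gen[OF assms, of K L] gen_eq[of i K L] R_eq[of i t L] assms unfolding eqv_def by auto

lemma reduce:
  assumes Kpos: "\<forall>i\<in>{1..t}. K i > 0"
  shows "m \<le> t \<Longrightarrow> \<exists>j'. (\<forall>i\<in>{1..m}. j' i < K i) \<and> (\<forall>i. m < i \<longrightarrow> j' i = j i) \<and> eqv t K L (mon t j) (mon t j')"
proof (induction m arbitrary: j)
  case 0
  then show ?case by (intro exI[of _ j]) (auto simp: eqv_refl)
next
  case (Suc m)
  define i where "i = Suc m"
  have i: "i \<in> {1..t}" using Suc.prems i_def by auto
  define q where "q = j i div K i"
  define r where "r = j i mod K i"
  define j0 where "j0 = j(i := r)"
  define j1 where "j1 = (\<lambda>k. j0 k + q * Rv L i k)"
  have "j = (\<lambda>k. j0 k + (if k = i then K i * q else 0))"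
    unfolding j0_def q_def r_def by (auto simp: fun_eq_iff)
  then have "mon t j = mon t j0 * mon t (\<lambda>k. if k = i then K i * q else 0)"
    by (metis mon_add)
  also have "\<dots> = mon t j0 * (Xv i ^ K i) ^ q"
    using i by (simp add: mon_single power_mult)
  finally have e1: "mon t j = mon t j0 * (Xv i ^ K i) ^ q" .
  have "eqv t K L ((Xv i ^ K i) ^ q) (mon t (Rv L i) ^ q)"
    by (rule eqv_power[OF Xv_red[OF i]]) (auto intro: polys_power polys_Xv i mon_polys)
  then have "eqv t K L (mon t j0 * (Xv i ^ K i) ^ q) (mon t j0 * mon t (Rv L i) ^ q)"
    by (intro eqv_mult[OF eqv_refl]) (auto intro: polys_power polys_Xv i mon_polys)
  also have "mon t j0 * mon t (Rv L i) ^ q = mon t j1"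
    unfolding j1_def mon_power mon_add ..
  finally have e2: "eqv t K L (mon t j) (mon t j1)" using e1 by simp
  obtain j' where j': "\<forall>k\<in>{1..m}. j' k < K k" "\<forall>k. m < k \<longrightarrow> j' k = j1 k" "eqv t K L (mon t j1) (mon t j')"
    using Suc.IH[of j1] Suc.prems by auto
  have "j' i = r" using j'(2) unfolding i_def j1_def j0_def Rv_def by simp
  moreover have "r < K i" unfolding r_def using Kpos i by auto
  ultimately have "\<forall>k\<in>{1..Suc m}. j' k < K k" using j'(1) i_def by (auto simp: le_Suc_eq)
  moreover have "\<forall>k. Suc m < k \<longrightarrow> j' k = j k" using j'(2) unfolding i_def j1_def j0_def Rv_def by auto
  moreover have "eqv t K L (mon t j) (mon t j')" using e2 j'(3) by (rule eqv_trans)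
  ultimately show ?case by blast
qed

lemma pow_dvd_one:
  assumes "eqv t K L (x ^ a) 1" "x \<in> polys t" "a dvd b"
  shows "eqv t K L (x ^ (b * m)) 1"
proof -
  obtain c where b: "b = a * c" using assms(3) by blast
  have "x ^ (b * m) = (x ^ a) ^ (c * m)" unfolding b by (simp add: power_mult mult.assoc)
  moreover have "eqv t K L ((x ^ a) ^ (c * m)) (1 ^ (c * m))"
    by (rule eqv_power[OF assms(1)]) (auto intro: polys_power assms(2) polys_one)
  ultimately show ?thesis by simp
qed

lemma Xv_pow_one:
  assumes Kpos: "\<forall>i\<in>{1..t}. K i > 0"
  shows "i \<in> {1..t} \<Longrightarrow> eqv t K L (Xv i ^ (\<Prod>k\<in>{1..i}. K k)) 1"
proof (induction i rule: less_induct)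
  case (less i)
  define Q where "Q = (\<Prod>k\<in>{1..<i}. K k)"
  have "{1..i} = insert i {1..<i}" using less.prems by auto
  then have PQ: "(\<Prod>k\<in>{1..i}. K k) = K i * Q" unfolding Q_def by simp
  have "eqv t K L ((Xv i ^ K i) ^ Q) (mon t (Rv L i) ^ Q)"
    by (rule eqv_power[OF Xv_red[OF less.prems]]) (auto intro: polys_power polys_Xv less.prems mon_polys)
  also have "mon t (Rv L i) ^ Q = (\<Prod>k\<in>{1..t}. Xv k ^ (Q * Rv L i k))"
    by (subst mon_power) (simp add: mon_def)
  finally have e1: "eqv t K L ((Xv i ^ K i) ^ Q) (\<Prod>k\<in>{1..t}. Xv k ^ (Q * Rv L i k))" .
  have "eqv t K L (\<Prod>k\<in>{1..t}. Xv k ^ (Q * Rv L i k)) (\<Prod>k\<in>{1..t}. 1)"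
  proof (rule eqv_prod)
    fix k assume k: "k \<in> {1..t}"
    show "eqv t K L (Xv k ^ (Q * Rv L i k)) 1"
    proof (cases "k < i")
      case True
      have "(\<Prod>k\<in>{1..k}. K k) dvd Q" unfolding Q_def
        by (rule prod_dvd_prod_subset) (use True in auto)
      then show ?thesis using pow_dvd_one[OF less.IH[OF True k] polys_Xv[OF k]] True
        unfolding Rv_def by simp
    next
      case False
      then show ?thesis unfolding Rv_def by (simp add: eqv_refl)
    qed
  qed (simp_all add: polys_power polys_Xv polys_one)
  then have "eqv t K L ((Xv i ^ K i) ^ Q) 1" using e1 eqv_trans by fastforce
  then show ?case unfolding PQ by (simp add: power_mult)
qed

lemma mon_pow_n:
  assumes Kpos: "\<forall>i\<in>{1..t}. K i > 0"
  shows "eqv t K L (mon t j ^ (\<Prod>k\<in>{1..t}. K k)) 1"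
proof -
  let ?N = "\<Prod>k\<in>{1..t}. K k"
  have "mon t j ^ ?N = (\<Prod>i\<in>{1..t}. Xv i ^ (?N * j i))"
    by (subst mon_power) (simp add: mon_def)
  also have "eqv t K L \<dots> (\<Prod>i\<in>{1..t}. 1)"
  proof (rule eqv_prod)
    fix i assume i: "i \<in> {1..t}"
    have "(\<Prod>k\<in>{1..i}. K k) dvd ?N"
      by (rule prod_dvd_prod_subset) (use i in auto)
    then show "eqv t K L (Xv i ^ (?N * j i)) 1"
      using pow_dvd_one[OF Xv_pow_one[OF Kpos i] polys_Xv[OF i]] by simp
  qed (simp_all add: polys_power polys_Xv polys_one)
  finally show ?thesis by simp
qed

definition std :: "nat \<Rightarrow> (nat \<Rightarrow> nat) \<Rightarrow> (nat \<Rightarrow> nat) \<Rightarrow> bool" where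
  "std t K j \<longleftrightarrow> (\<forall>i\<in>{1..t}. j i < K i)"

lemma std_exists:
  assumes Kpos: "\<forall>i\<in>{1..t}. K i > 0"
  shows "\<exists>j'. std t K j' \<and> eqv t K L (mon t j) (mon t j')"
  using reduce[OF Kpos, of t j L] unfolding std_def by auto

lemma cls_mon_Gamma:
  assumes Kpos: "\<forall>i\<in>{1..t}. K i > 0"
  shows "cls t K L (mon t j) \<in> Gamma t K L"
proof -
  obtain j' where "std t K j'" "eqv t K L (mon t j) (mon t j')" using std_exists[OF Kpos] by blast
  then have "cls t K L (mon t j) = cls t K L (mon t j')" "\<forall>i\<in>{1..t}. j' i < K i"
    using cls_eq_iff mon_polys unfolding std_def by blast+
  then show ?thesis unfolding Gamma_def by blast
qed

lemma Gamma_elem: "x \<in> Gamma t K L \<Longrightarrow> \<exists>j. x = cls t K L (mon t j)"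
  unfolding Gamma_def by blast

lemma GG_simps: "carrier (GammaGroup t K L) = Gamma t K L"
  "mult (GammaGroup t K L) = qmult t K L" "one (GammaGroup t K L) = cls t K L 1"
  by (simp_all add: GammaGroup_def)

lemma comm_group_Gamma:
  assumes Kpos: "\<forall>i\<in>{1..t}. K i > 0"
  shows "comm_group (GammaGroup t K L)"
proof (rule comm_groupI, unfold GG_simps)
  fix x y assume "x \<in> Gamma t K L" "y \<in> Gamma t K L"
  then obtain a b where x: "x = cls t K L (mon t a)" and y: "y = cls t K L (mon t b)" using Gamma_elem by metis
  show "qmult t K L x y \<in> Gamma t K L"
    unfolding x y qmult_cls[OF mon_polys mon_polys] mon_add[symmetric] by (rule cls_mon_Gamma[OF Kpos])
  show "qmult t K L x y = qmult t K L y x"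
    unfolding x y qmult_cls[OF mon_polys mon_polys] by (simp add: mult.commute)
next
  show "cls t K L 1 \<in> Gamma t K L" using cls_mon_Gamma[OF Kpos, of L "\<lambda>_. 0"] by (simp add: mon_zero)
next
  fix x y z assume "x \<in> Gamma t K L" "y \<in> Gamma t K L" "z \<in> Gamma t K L"
  then obtain a b c where x: "x = cls t K L (mon t a)" and y: "y = cls t K L (mon t b)"
    and z: "z = cls t K L (mon t c)" using Gamma_elem by metis
  show "qmult t K L (qmult t K L x y) z = qmult t K L x (qmult t K L y z)"
    unfolding x y z by (simp add: qmult_cls mon_polys polys_mult mult.assoc)
next
  fix x assume "x \<in> Gamma t K L"
  then obtain a where x: "x = cls t K L (mon t a)" using Gamma_elem by metis
  show "qmult t K L (cls t K L 1) x = x"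
    unfolding x by (simp add: qmult_cls mon_polys polys_one)
  let ?N = "\<Prod>k\<in>{1..t}. K k"
  have N: "?N > 0" using Kpos by (simp add: prod_pos)
  let ?y = "cls t K L (mon t (\<lambda>i. (?N - 1) * a i))"
  have "qmult t K L ?y x = cls t K L (mon t (\<lambda>i. (?N - 1) * a i) * mon t a)"
    unfolding x by (simp add: qmult_cls mon_polys)
  also have "mon t (\<lambda>i. (?N - 1) * a i) * mon t a = mon t a ^ ?N"
    unfolding mon_power mon_add[symmetric]
  proof (rule mon_cong)
    fix i show "(?N - 1) * a i + a i = ?N * a i" using N
      by (metis Suc_diff_1 add.commute mult_Suc)
  qed
  also have "cls t K L (mon t a ^ ?N) = cls t K L 1"
    using cls_eq_iff[OF polys_power[OF mon_polys] polys_one] mon_pow_n[OF Kpos] by blast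
  finally show "\<exists>y\<in>Gamma t K L. qmult t K L y x = cls t K L 1"
    using cls_mon_Gamma[OF Kpos] by blast
qed

definition chi :: "(nat \<Rightarrow> complex) \<Rightarrow> (nat \<Rightarrow>\<^sub>0 nat) \<Rightarrow> complex" where
  "chi v e = (\<Prod>k\<in>Poly_Mapping.keys e. v k ^ Poly_Mapping.lookup e k)"

lemma chi_sup: "finite S \<Longrightarrow> Poly_Mapping.keys e \<subseteq> S \<Longrightarrow> chi v e = (\<Prod>k\<in>S. v k ^ Poly_Mapping.lookup e k)"
  unfolding chi_def by (rule prod.mono_neutral_left) (auto simp: in_keys_iff)

lemma chi_add: "chi v (e + f) = chi v e * chi v f"
proof -
  let ?S = "Poly_Mapping.keys e \<union> Poly_Mapping.keys f"
  have "chi v (e + f) = (\<Prod>k\<in>?S. v k ^ Poly_Mapping.lookup (e + f) k)"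
    by (rule chi_sup) (auto simp: keys_add[of e f])
  also have "\<dots> = (\<Prod>k\<in>?S. v k ^ Poly_Mapping.lookup e k) * (\<Prod>k\<in>?S. v k ^ Poly_Mapping.lookup f k)"
    by (simp add: lookup_add power_add prod.distrib)
  also have "\<dots> = chi v e * chi v f"
    by (simp add: chi_sup[symmetric])
  finally show ?thesis .
qed

lemma chi_zero: "chi v 0 = 1" unfolding chi_def by simp
lemma chi_single: "chi v (Poly_Mapping.single i 1) = v i" unfolding chi_def by simp

definition ev :: "(nat \<Rightarrow> complex) \<Rightarrow> mpoly \<Rightarrow> complex" where
  "ev v p = (\<Sum>e\<in>Poly_Mapping.keys p. of_real (Poly_Mapping.lookup p e) * chi v e)"

lemma ev_sup: "finite S \<Longrightarrow> Poly_Mapping.keys p \<subseteq> S \<Longrightarrow> ev v p = (\<Sum>e\<in>S. of_real (Poly_Mapping.lookup p e) * chi v e)"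
  unfolding ev_def by (rule sum.mono_neutral_left) (auto simp: in_keys_iff)

lemma ev_add: "ev v (p + q) = ev v p + ev v q"
proof -
  let ?S = "Poly_Mapping.keys p \<union> Poly_Mapping.keys q"
  have "ev v (p + q) = (\<Sum>e\<in>?S. of_real (Poly_Mapping.lookup (p + q) e) * chi v e)"
    by (rule ev_sup) (auto simp: keys_add[of p q])
  also have "\<dots> = (\<Sum>e\<in>?S. of_real (Poly_Mapping.lookup p e) * chi v e) + (\<Sum>e\<in>?S. of_real (Poly_Mapping.lookup q e) * chi v e)"
    by (simp add: lookup_add distrib_right sum.distrib)
  also have "\<dots> = ev v p + ev v q"
    by (simp add: ev_sup[symmetric])
  finally show ?thesis .
qed

lemma ev_zero: "ev v 0 = 0" unfolding ev_def by simp

lemma ev_single: "ev v (Poly_Mapping.single e c) = of_real c * chi v e"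
  by (subst ev_sup[of "{e}"]) auto

lemma ev_sum: "ev v (sum f A) = (\<Sum>a\<in>A. ev v (f a))"
  by (induction A rule: infinite_finite_induct) (auto simp: ev_add ev_zero)

lemma expand: "p = (\<Sum>e\<in>Poly_Mapping.keys p. Poly_Mapping.single e (Poly_Mapping.lookup p e))"
proof (rule poly_mapping_eqI)
  fix k
  show "Poly_Mapping.lookup p k = Poly_Mapping.lookup (\<Sum>e\<in>Poly_Mapping.keys p. Poly_Mapping.single e (Poly_Mapping.lookup p e)) k"
    by (auto simp: lookup_sum lookup_single when_def in_keys_iff)
qed

lemma ev_mult: "ev v (p * q) = ev v p * ev v q"
proof -
  have ep: "(\<Sum>e\<in>Poly_Mapping.keys p. Poly_Mapping.single e (Poly_Mapping.lookup p e)) = p" by (rule expand[symmetric])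
  have eq: "(\<Sum>e\<in>Poly_Mapping.keys q. Poly_Mapping.single e (Poly_Mapping.lookup q e)) = q" by (rule expand[symmetric])
  have "p * q = (\<Sum>e\<in>Poly_Mapping.keys p. Poly_Mapping.single e (Poly_Mapping.lookup p e)) * (\<Sum>e\<in>Poly_Mapping.keys q. Poly_Mapping.single e (Poly_Mapping.lookup q e))"
    by (simp only: ep eq)
  also have "\<dots> = (\<Sum>e\<in>Poly_Mapping.keys p. \<Sum>f\<in>Poly_Mapping.keys q. Poly_Mapping.single (e + f) (Poly_Mapping.lookup p e * Poly_Mapping.lookup q f))"
    by (simp add: sum_product mult_single)
  finally have pq: "p * q = \<dots>" .
  show ?thesis unfolding pq ev_sum ev_single
    by (simp add: chi_add sum_product ev_def mult_ac)
qed

lemma ev_one: "ev v 1 = 1"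
  using ev_single[of v 0 1] by (simp add: chi_zero)

lemma ev_uminus: "ev v (- p) = - ev v p"
  using ev_add[of v p "- p"] by (simp add: ev_zero add_eq_0_iff2)

lemma ev_diff: "ev v (p - q) = ev v p - ev v q"
  using ev_add[of v p "- q"] by (simp add: ev_uminus)

lemma ev_power: "ev v (p ^ m) = ev v p ^ m"
  by (induction m) (auto simp: ev_one ev_mult)

lemma ev_prod: "ev v (prod f A) = (\<Prod>a\<in>A. ev v (f a))"
  by (induction A rule: infinite_finite_induct) (auto simp: ev_one ev_mult)

lemma ev_Xv: "ev v (Xv i) = v i"
  unfolding Xv_def ev_single chi_single by simp

lemma ev_mon: "ev v (mon t j) = (\<Prod>k\<in>{1..t}. v k ^ j k)"
  unfolding mon_def by (simp add: ev_prod ev_power ev_Xv)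

definition goodpre :: "nat \<Rightarrow> (nat \<Rightarrow> nat) \<Rightarrow> (nat \<Rightarrow> nat \<Rightarrow> nat) \<Rightarrow> (nat \<Rightarrow> complex) \<Rightarrow> bool" where
  "goodpre m K L v \<longleftrightarrow> (\<forall>k\<in>{1..m}. v k ^ K k = (\<Prod>m'\<in>{1..<k}. v m' ^ L k m'))"

lemma ev_gen_good: "goodpre t K L v \<Longrightarrow> k \<in> {1..t} \<Longrightarrow> ev v (gen K L k) = 0"
  unfolding goodpre_def by (simp add: gen_eq ev_diff ev_power ev_prod ev_Xv)

lemma ev_I: "goodpre t K L v \<Longrightarrow> p \<in> idealI t K L \<Longrightarrow> ev v p = 0"
  unfolding idealI_alt by (auto simp: ev_sum ev_mult ev_gen_good)

lemma ev_eqv: "goodpre t K L v \<Longrightarrow> eqv t K L p q \<Longrightarrow> ev v p = ev v q"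
  unfolding eqv_def using ev_I ev_diff by fastforce

lemma good_nonzero:
  assumes Kpos: "\<forall>i\<in>{1..t}. K i > 0" and g: "goodpre t K L v"
  shows "k \<in> {1..t} \<Longrightarrow> v k \<noteq> 0"
proof (induction k rule: less_induct)
  case (less k)
  have "(\<Prod>m'\<in>{1..<k}. v m' ^ L k m') \<noteq> 0"
    using less.IH less.prems by (auto simp: prod_zero_iff)
  then have "v k ^ K k \<noteq> 0" using g less.prems unfolding goodpre_def by auto
  then show ?case using Kpos less.prems by (metis zero_power)
qed

lemma root_exists: "n > 0 \<Longrightarrow> \<exists>z::complex. z ^ n = w"
proof -
  assume n: "n > 0"
  have "rcis (root n (cmod w)) (Arg w / n) ^ n = rcis (root n (cmod w) ^ n) (real n * (Arg w / n))"
    by (rule DeMoivre2)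
  also have "\<dots> = rcis (cmod w) (Arg w)" using n by simp
  also have "\<dots> = w" by (rule rcis_cmod_Arg)
  finally show ?thesis by blast
qed

lemma extend_good:
  assumes Kpos: "\<forall>i\<in>{1..t}. K i > 0"
  shows "t - m = d \<Longrightarrow> m \<le> t \<Longrightarrow> goodpre m K L u \<Longrightarrow> \<exists>v. goodpre t K L v \<and> (\<forall>k\<le>m. v k = u k)"
proof (induction d arbitrary: m u)
  case 0
  then have "m = t" by simp
  then show ?case using 0 by auto
next
  case (Suc d)
  then have mt: "Suc m \<le> t" by simp
  then have "K (Suc m) > 0" using Kpos by auto
  then obtain z where z: "z ^ K (Suc m) = (\<Prod>m'\<in>{1..<Suc m}. u m' ^ L (Suc m) m')"
    using root_exists by blast
  define u' where "u' = u(Suc m := z)"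
  have "goodpre (Suc m) K L u'"
    unfolding goodpre_def
  proof
    fix k assume k: "k \<in> {1..Suc m}"
    have pr: "(\<Prod>m'\<in>{1..<k}. u' m' ^ L k m') = (\<Prod>m'\<in>{1..<k}. u m' ^ L k m')"
      by (rule prod.cong) (use k in \<open>auto simp: u'_def\<close>)
    show "u' k ^ K k = (\<Prod>m'\<in>{1..<k}. u' m' ^ L k m')"
    proof (cases "k = Suc m")
      case True
      then show ?thesis using z pr by (simp add: u'_def)
    next
      case False
      then have "k \<in> {1..m}" using k by auto
      then show ?thesis using Suc.prems(3) pr False unfolding goodpre_def by (simp add: u'_def)
    qed
  qed
  moreover have "t - Suc m = d" using Suc.prems by simp
  ultimately obtain v where "goodpre t K L v" "\<forall>k\<le>Suc m. v k = u' k"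
    using Suc.IH[of "Suc m" u'] mt by blast
  then show ?case unfolding u'_def by (intro exI[of _ v]) auto
qed

lemma good_exists:
  assumes Kpos: "\<forall>i\<in>{1..t}. K i > 0"
  shows "\<exists>v. goodpre t K L v"
  using extend_good[OF Kpos, of 0 t L "\<lambda>_. 0"] by (auto simp: goodpre_def)

lemma split_prod:
  fixes i t :: nat
  assumes "i \<in> {1..t}"
  shows "(\<Prod>k\<in>{1..t}. f k) = (\<Prod>k\<in>{1..<i}. f k) * f i * (\<Prod>k\<in>{i<..t}. f k)"
proof -
  have e: "{1..t} = {1..<i} \<union> insert i {i<..t}" using assms by auto
  have "(\<Prod>k\<in>{1..t}. f k) = prod f ({1..<i} \<union> insert i {i<..t})" by (simp only: e)
  also have "\<dots> = prod f {1..<i} * prod f (insert i {i<..t})"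
    by (rule prod.union_disjoint) auto
  also have "prod f (insert i {i<..t}) = f i * prod f {i<..t}" by simp
  finally show ?thesis by (simp add: mult.assoc)
qed

lemma zeta_facts:
  assumes n: "n > (0::nat)"
  shows "cis (2 * pi / real n) ^ n = 1" "\<And>d. 0 < d \<Longrightarrow> d < n \<Longrightarrow> cis (2 * pi / real n) ^ d \<noteq> 1"
proof -
  have inj: "inj_on (\<lambda>k. cis (2 * pi * real k / real n)) {..<n}"
    using bij_betw_roots_unity[OF n] by (simp add: bij_betw_def)
  have pw: "cis (2 * pi / real n) ^ d = cis (2 * pi * real d / real n)" for d
    by (simp add: DeMoivre mult.commute)
  show "cis (2 * pi / real n) ^ n = 1" unfolding pw using n by simp
  fix d assume d: "0 < d" "d < n"
  show "cis (2 * pi / real n) ^ d \<noteq> 1"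
  proof
    assume "cis (2 * pi / real n) ^ d = 1"
    then have "cis (2 * pi * real d / real n) = cis (2 * pi * real 0 / real n)" unfolding pw by simp
    then have "d = 0" using inj d n unfolding inj_on_def by blast
    then show False using d by simp
  qed
qed

lemma sep_core:
  fixes i t :: nat
  assumes Kpos: "\<forall>i\<in>{1..t}. K i > 0" and i: "i \<in> {1..t}"
    and hi: "\<forall>k. i < k \<and> k \<le> t \<longrightarrow> j k = j' k" and lt: "j i < j' i" "j' i < K i"
    and H: "\<forall>v. goodpre t K L v \<longrightarrow> (\<Prod>k\<in>{1..t}. v k ^ j k) = (\<Prod>k\<in>{1..t}. v k ^ j' k)"
  shows False
proof -
  obtain v0 where g0: "goodpre t K L v0" using good_exists[OF Kpos] by blast
  define n where "n = K i"
  have n: "n > 0" using Kpos i n_def by auto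
  define z where "z = cis (2 * pi / real n)"
  define d where "d = j' i - j i"
  have d: "0 < d" "d < n" using lt unfolding d_def n_def by auto
  have jd: "j' i = j i + d" using lt unfolding d_def by simp
  define u where "u = v0(i := z * v0 i)"
  have gu: "goodpre i K L u" unfolding goodpre_def
  proof
    fix k assume k: "k \<in> {1..i}"
    have pr: "(\<Prod>m'\<in>{1..<k}. u m' ^ L k m') = (\<Prod>m'\<in>{1..<k}. v0 m' ^ L k m')"
      by (rule prod.cong) (use k in \<open>auto simp: u_def\<close>)
    have kt: "k \<in> {1..t}" using k i by auto
    have g0k: "v0 k ^ K k = (\<Prod>m'\<in>{1..<k}. v0 m' ^ L k m')" using g0 kt unfolding goodpre_def by blast
    show "u k ^ K k = (\<Prod>m'\<in>{1..<k}. u m' ^ L k m')"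
    proof (cases "k = i")
      case True
      have "u k ^ K k = z ^ n * v0 i ^ K i" using True by (simp add: u_def n_def power_mult_distrib)
      also have "z ^ n = 1" unfolding z_def by (rule zeta_facts(1)[OF n])
      finally show ?thesis using g0k pr True by simp
    next
      case False
      then show ?thesis using g0k pr by (simp add: u_def)
    qed
  qed
  obtain v1 where g1: "goodpre t K L v1" and v1: "\<forall>k\<le>i. v1 k = u k"
    using extend_good[OF Kpos, of i "t - i" L u] i gu by auto
  define X where "X v = (\<Prod>k\<in>{1..<i}. v k ^ j k)" for v :: "nat \<Rightarrow> complex"
  define X' where "X' v = (\<Prod>k\<in>{1..<i}. v k ^ j' k)" for v :: "nat \<Rightarrow> complex"
  define Y where "Y v = (\<Prod>k\<in>{i<..t}. v k ^ j k)" for v :: "nat \<Rightarrow> complex"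
  have Y': "(\<Prod>k\<in>{i<..t}. v k ^ j' k) = Y v" for v
    unfolding Y_def by (rule prod.cong) (use hi in auto)
  have key: "X v = X' v * v i ^ d \<and> X' v * v i ^ d \<noteq> 0" if g: "goodpre t K L v" for v
  proof -
    have nz: "\<And>k. k \<in> {1..t} \<Longrightarrow> v k \<noteq> 0" using good_nonzero[OF Kpos g] by blast
    have Ynz: "Y v \<noteq> 0" unfolding Y_def using nz by (auto simp: prod_zero_iff)
    have X'nz: "X' v \<noteq> 0" unfolding X'_def using nz i by (auto simp: prod_zero_iff)
    have vinz: "v i \<noteq> 0" using nz i by blast
    have "X v * v i ^ j i * Y v = X' v * v i ^ j' i * Y v"
      using H g split_prod[OF i, of "\<lambda>k. v k ^ j k"] split_prod[OF i, of "\<lambda>k. v k ^ j' k"] Y'[of v]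
      unfolding X_def X'_def Y_def by simp
    then have "X v * v i ^ j i = (X' v * v i ^ d) * v i ^ j i"
      using Ynz unfolding jd by (simp add: power_add mult_ac)
    then have "X v = X' v * v i ^ d" using vinz by simp
    then show ?thesis using X'nz vinz by simp
  qed
  have "X v1 = X v0" unfolding X_def by (rule prod.cong) (use v1 in \<open>auto simp: u_def\<close>)
  moreover have "X' v1 = X' v0" unfolding X'_def by (rule prod.cong) (use v1 in \<open>auto simp: u_def\<close>)
  moreover have "v1 i = z * v0 i" using v1 by (simp add: u_def)
  ultimately have "X' v0 * v0 i ^ d = (X' v0 * v0 i ^ d) * z ^ d"
    using key[OF g0] key[OF g1] by (simp add: power_mult_distrib mult_ac)
  then have "z ^ d = 1" using key[OF g0] by (metis mult.right_neutral mult_left_cancel)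
  then show False using zeta_facts(2)[OF n d] unfolding z_def by simp
qed

lemma sep:
  assumes Kpos: "\<forall>i\<in>{1..t}. K i > 0" and s: "std t K j" "std t K j'"
    and e: "eqv t K L (mon t j) (mon t j')"
  shows "\<forall>k\<in>{1..t}. j k = j' k"
proof (rule ccontr)
  assume "\<not> (\<forall>k\<in>{1..t}. j k = j' k)"
  then have ne: "{k\<in>{1..t}. j k \<noteq> j' k} \<noteq> {}" by auto
  define i where "i = Max {k\<in>{1..t}. j k \<noteq> j' k}"
  have fin: "finite {k\<in>{1..t}. j k \<noteq> j' k}" by simp
  have iS: "i \<in> {k\<in>{1..t}. j k \<noteq> j' k}" unfolding i_def using Max_in[OF fin ne] .
  have hi: "\<forall>k. i < k \<and> k \<le> t \<longrightarrow> j k = j' k"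
  proof (intro allI impI)
    fix k assume k: "i < k \<and> k \<le> t"
    show "j k = j' k"
    proof (rule ccontr)
      assume "j k \<noteq> j' k"
      then have "k \<in> {k\<in>{1..t}. j k \<noteq> j' k}" using k iS by auto
      then have "k \<le> i" unfolding i_def using Max_ge[OF fin] by blast
      then show False using k by simp
    qed
  qed
  have H: "\<forall>v. goodpre t K L v \<longrightarrow> (\<Prod>k\<in>{1..t}. v k ^ j k) = (\<Prod>k\<in>{1..t}. v k ^ j' k)"
    using ev_eqv[OF _ e] by (simp add: ev_mon)
  have i: "i \<in> {1..t}" using iS by simp
  have lt: "j i < K i" "j' i < K i" using s i unfolding std_def by auto
  show False
  proof (cases "j i < j' i")
    case True
    then show False using sep_core[OF Kpos i hi True lt(2) H] by simp
  next
    case False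
    then have "j' i < j i" using iS by auto
    moreover have "\<forall>k. i < k \<and> k \<le> t \<longrightarrow> j' k = j k" using hi by simp
    moreover have "\<forall>v. goodpre t K L v \<longrightarrow> (\<Prod>k\<in>{1..t}. v k ^ j' k) = (\<Prod>k\<in>{1..t}. v k ^ j k)"
      using H by simp
    ultimately show False using sep_core[OF Kpos i, of j' j] lt(1) by blast
  qed
qed

lemma Gamma_image:
  "Gamma t K L = (\<lambda>j. cls t K L (mon t j)) ` (PiE {1..t} (\<lambda>i. {..<K i}))"
proof (rule equalityI; rule subsetI)
  fix x assume "x \<in> Gamma t K L"
  then obtain j where x: "x = cls t K L (mon t j)" and j: "\<forall>i\<in>{1..t}. j i < K i"
    unfolding Gamma_def by blast
  have "restrict j {1..t} \<in> PiE {1..t} (\<lambda>i. {..<K i})" using j by auto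
  moreover have "mon t (restrict j {1..t}) = mon t j" by (rule mon_cong) simp
  ultimately show "x \<in> (\<lambda>j. cls t K L (mon t j)) ` (PiE {1..t} (\<lambda>i. {..<K i}))"
    using x by (metis image_eqI)
next
  fix x assume "x \<in> (\<lambda>j. cls t K L (mon t j)) ` (PiE {1..t} (\<lambda>i. {..<K i}))"
  then obtain j where "x = cls t K L (mon t j)" "j \<in> PiE {1..t} (\<lambda>i. {..<K i})" by blast
  then show "x \<in> Gamma t K L" unfolding Gamma_def by (auto simp: PiE_iff)
qed

lemma card_Gamma:
  assumes Kpos: "\<forall>i\<in>{1..t}. K i > 0"
  shows "card (Gamma t K L) = (\<Prod>i\<in>{1..t}. K i)"
proof -
  have "inj_on (\<lambda>j. cls t K L (mon t j)) (PiE {1..t} (\<lambda>i. {..<K i}))"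
  proof (rule inj_onI)
    fix j j' assume j: "j \<in> PiE {1..t} (\<lambda>i. {..<K i})" and j': "j' \<in> PiE {1..t} (\<lambda>i. {..<K i})"
      and eq: "cls t K L (mon t j) = cls t K L (mon t j')"
    have "eqv t K L (mon t j) (mon t j')" using eq cls_eq_iff mon_polys by blast
    moreover have "std t K j" "std t K j'" using j j' unfolding std_def by (auto simp: PiE_iff)
    ultimately have "\<forall>k\<in>{1..t}. j k = j' k" using sep[OF Kpos] by blast
    then show "j = j'" using PiE_ext[OF j j'] by blast
  qed
  then have "card (Gamma t K L) = card (PiE {1..t} (\<lambda>i. {..<K i}))"
    unfolding Gamma_image by (rule card_image)
  also have "\<dots> = (\<Prod>i\<in>{1..t}. K i)" by (simp add: card_PiE)
  finally show ?thesis .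
qed

theorem mainTheorem2:
  fixes t n :: nat and K :: "nat \<Rightarrow> nat" and L :: "nat \<Rightarrow> nat \<Rightarrow> nat"
  assumes "t \<ge> 1"
    and "\<forall>i\<in>{1..t}. K i \<ge> 2"
    and "(\<Prod>i\<in>{1..t}. K i) = n"
    and "\<forall>i\<in>{2..t}. \<forall>j\<in>{1..<i}. L i j \<le> K j - 1"
  shows "comm_group (GammaGroup t K L) \<and> card (Gamma t K L) = n"
proof -
  have Kpos: "\<forall>i\<in>{1..t}. K i > 0" using assms(2) by fastforce
  show ?thesis using comm_group_Gamma[OF Kpos] card_Gamma[OF Kpos] assms(3) by simp
qed

end
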